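(* Let $\rho_1,\rho_2$ be non-negative Borel measures on $\mathbb{T}^d$ with $\rho_k(\{\mathbf{1}\})=0$ and $\|\mathbf{1}-\Re\boldsymbol s\|\in L^1(\rho_k)$ for $k=1,2$. Suppose that $$\Re\int_{\mathbb{T}^d}(1-\boldsymbol s^{\boldsymbol p})\,d\rho_1(\boldsymbol s)=\Re\int_{\mathbb{T}^d}(1-\boldsymbol s^{\boldsymbol p})\,d\rho_2(\boldsymbol s)\quad\text{for all }\boldsymbol p\in\mathbb{Z}^d.$$ Then $\rho_1(B)=\rho_2(B)$ for every even Borel set $B\subset\mathbb{T}^d$.
   Context: $\boldsymbol s^{\boldsymbol p}=s_1^{p_1}\cdots s_d^{p_d}$, $\Re\boldsymbol s=(\Re s_1,\dots,\Re s_d)$, $\mathbf{1}=(1,\dots,1)$. A Borel set $B\subset\mathbb{T}^d$ is even if $B^{-1}=B$, where $\boldsymbol s^{-1}=(1/s_1,\dots,1/s_d)$. *)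

theory Defs
  imports "HOL-Analysis.Analysis"
begin

definition torus :: "(complex ^ 'd) set" where
  "torus = {s. \<forall>i. norm (s $ i) = 1}"

definition monom_pow :: "complex ^ 'd \<Rightarrow> int ^ 'd \<Rightarrow> complex" where
  "monom_pow s p = (\<Prod>i\<in>UNIV. (s $ i) powi (p $ i))"

definition tinv :: "complex ^ 'd \<Rightarrow> complex ^ 'd" where
  "tinv s = (\<chi> i. 1 / s $ i)"

definition one_minus_re :: "complex ^ 'd \<Rightarrow> real ^ 'd" where
  "one_minus_re s = (\<chi> i. 1 - Re (s $ i))"

definition even_borel :: "(complex ^ 'd) set \<Rightarrow> bool" where
  "even_borel B \<longleftrightarrow> B \<subseteq> torus \<and> B \<in> sets borel \<and> tinv ` B = B"

end

theory Submission
  imports Defs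
begin


definition cj :: "complex ^ 'd \<Rightarrow> complex ^ 'd" where
  "cj s = (\<chi> i. cnj (s $ i))"

lemma cj_cj[simp]: "cj (cj s) = s"
  by (simp add: cj_def vec_eq_iff)

lemma cj_nth[simp]: "cj s $ i = cnj (s $ i)"
  by (simp add: cj_def)

lemma cj_torus: "s \<in> torus \<Longrightarrow> cj s \<in> torus"
  by (simp add: torus_def)

lemma cj_image_torus: "cj ` torus = torus"
  by (auto simp: image_iff intro!: exI[of _ "cj x" for x] cj_torus) (metis cj_cj cj_torus)

lemma continuous_cj: "continuous_on A cj"
  unfolding cj_def by (intro continuous_intros)

lemma cj_inj: "inj cj"
  by (metis cj_cj injI)

lemma cj_image_eq_vimage: "cj ` A = cj -` A"
  by (auto simp: image_iff) (metis cj_cj)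

lemma torus_eq: "torus = (\<Inter>i. {s. norm (s $ i) = 1})"
  by (auto simp: torus_def)

lemma closed_torus: "closed torus"
proof -
  have "closed {s::complex^'d. cmod (s $ i) = 1}" for i
    by (intro closed_Collect_eq continuous_on_norm continuous_on_component continuous_on_id continuous_on_const)
  then show ?thesis unfolding torus_eq by (intro closed_INT) auto
qed

lemma bounded_torus: "bounded torus"
proof -
  have "norm s \<le> real CARD('d)" if "s \<in> (torus :: (complex^'d) set)" for s
  proof -
    have "norm s \<le> (\<Sum>i\<in>UNIV. norm (s $ i))" by (simp add: norm_vec_def L2_set_le_sum)
    also have "\<dots> = real CARD('d)" using that by (simp add: torus_def)
    finally show ?thesis .
  qed
  then show ?thesis unfolding bounded_iff by blast
qed

lemma compact_torus: "compact torus"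
  using bounded_torus closed_torus by (simp add: compact_eq_bounded_closed)

lemma torus_borel[measurable]: "torus \<in> sets borel"
  using closed_torus by (rule borel_closed)

lemma one_torus: "(\<chi> i. 1) \<in> torus"
  by (simp add: torus_def)

lemma torus_nz: "s \<in> torus \<Longrightarrow> s $ i \<noteq> 0"
  by (auto simp: torus_def dest: spec[of _ i])

lemma unit_inverse: "norm (z::complex) = 1 \<Longrightarrow> inverse z = cnj z"
  using complex_div_cnj[of 1 z] by (simp add: inverse_eq_divide)

lemma tinv_cj: "s \<in> torus \<Longrightarrow> tinv s = cj s"
  by (auto simp: tinv_def cj_def vec_eq_iff torus_def unit_inverse simp flip: inverse_eq_divide)

lemma monom_add: "s \<in> torus \<Longrightarrow> monom_pow s (p + q) = monom_pow s p * monom_pow s q"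
  by (simp add: monom_pow_def power_int_add torus_nz prod.distrib)

lemma monom_cj: "monom_pow (cj s) p = cnj (monom_pow s p)"
  by (simp add: monom_pow_def)

lemma monom_norm: "s \<in> torus \<Longrightarrow> norm (monom_pow s p) = 1"
proof -
  assume "s \<in> torus"
  then have "norm (s $ i powi p $ i) = 1" for i by (simp add: norm_power_int torus_def)
  then show ?thesis unfolding monom_pow_def prod_norm[symmetric] by simp
qed

lemma monom_minus: "s \<in> torus \<Longrightarrow> monom_pow s (- p) = cnj (monom_pow s p)"
  using unit_inverse[OF monom_norm]
  by (simp add: monom_pow_def power_int_minus prod_inversef[symmetric] flip: cnj_prod) 

lemma monom_zero[simp]: "monom_pow s 0 = 1"
  by (simp add: monom_pow_def)

lemma monom_axis: "monom_pow s (axis i 1) = s $ i"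
proof -
  have "s $ j powi (axis i 1 :: int^'a) $ j = (if j = i then s $ i else 1)" for j
    by (simp add: axis_def)
  then show ?thesis by (simp add: monom_pow_def)
qed



lemma meas_nth[measurable]: "(\<lambda>s::complex^'d. s $ i) \<in> borel_measurable borel"
  by (intro borel_measurable_continuous_onI continuous_on_component continuous_on_id)

lemma meas_monom[measurable]: "(\<lambda>s. monom_pow s p) \<in> borel_measurable borel"
  unfolding monom_pow_def power_int_def by measurable

lemma meas_cj[measurable]: "cj \<in> borel_measurable borel"
  by (intro borel_measurable_continuous_onI continuous_cj)



definition w :: "complex ^ 'd \<Rightarrow> real" where
  "w s = (\<Sum>i\<in>UNIV. 1 - Re (s $ i))"

lemma unit_re: "norm (u::complex) = 1 \<Longrightarrow> 1 - Re u = (cmod (1 - u))^2 / 2"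
proof -
  assume "norm u = 1"
  then have "(Re u)^2 + (Im u)^2 = 1" using complex_norm_square
    by (metis cmod_power2 one_power2)
  moreover have "(cmod (1-u))^2 = (1 - Re u)^2 + (Im u)^2" by (simp add: cmod_power2)
  ultimately show ?thesis by (simp add: power2_eq_square algebra_simps)
qed

lemma unit_sub_mult: "norm (a::complex) = 1 \<Longrightarrow> cmod (1 - a * b) \<le> cmod (1 - a) + cmod (1 - b)"
proof -
  assume a: "norm a = 1"
  have "1 - a * b = (1 - a) + a * (1 - b)" by (simp add: algebra_simps)
  then have "cmod (1 - a * b) \<le> cmod (1 - a) + cmod (a * (1 - b))"
    by (metis norm_triangle_ineq)
  also have "cmod (a * (1 - b)) = cmod (1 - b)" using a by (simp add: norm_mult)
  finally show ?thesis .
qed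

lemma unit_pow: "norm (z::complex) = 1 \<Longrightarrow> cmod (1 - z ^ n) \<le> real n * cmod (1 - z)"
proof (induction n)
  case 0 then show ?case by simp
next
  case (Suc n)
  have "cmod (1 - z ^ Suc n) \<le> cmod (1 - z) + cmod (1 - z ^ n)"
    using unit_sub_mult[of z "z ^ n"] Suc.prems by simp
  with Suc show ?case by (simp add: algebra_simps)
qed

lemma unit_powi: "norm (z::complex) = 1 \<Longrightarrow> cmod (1 - z powi k) \<le> \<bar>real_of_int k\<bar> * cmod (1 - z)"
proof (cases "k \<ge> 0")
  case True
  assume z: "norm z = 1"
  then show ?thesis using True unit_pow[OF z, of "nat k"] by (simp add: power_int_def)
next
  case False
  assume z: "norm z = 1"
  have nz: "norm (z ^ nat (-k)) = 1" using z by (simp add: norm_power)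
  have "z powi k = inverse (z ^ nat (-k))" using False by (simp add: power_int_def power_inverse)
  also have "\<dots> = cnj (z ^ nat (-k))" using unit_inverse[OF nz] .
  finally have "cmod (1 - z powi k) = cmod (1 - z ^ nat (-k))"
    by (metis complex_cnj_diff complex_cnj_one complex_mod_cnj)
  also have "\<dots> \<le> real (nat (-k)) * cmod (1 - z)" using unit_pow[OF z] .
  finally show ?thesis using False by simp
qed

lemma unit_prod: "finite A \<Longrightarrow> (\<forall>i\<in>A. norm (a i :: complex) = 1) \<Longrightarrow>
    cmod (1 - prod a A) \<le> (\<Sum>i\<in>A. cmod (1 - a i))"
proof (induction A rule: finite_induct)
  case empty then show ?case by simp
next
  case (insert x F)
  then have "cmod (1 - a x * prod a F) \<le> cmod (1 - a x) + cmod (1 - prod a F)"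
    by (intro unit_sub_mult) auto
  with insert show ?case by simp
qed

lemma phi_bound:
  assumes s: "s \<in> torus"
  shows "1 - Re (monom_pow s q) \<le> (\<Sum>i\<in>UNIV. (real_of_int (q $ i))^2) * w s"
proof -
  have u: "norm (s $ i) = 1" for i using s by (simp add: torus_def)
  have "cmod (1 - monom_pow s q) \<le> (\<Sum>i\<in>UNIV. cmod (1 - s $ i powi q $ i))"
    unfolding monom_pow_def by (rule unit_prod) (auto simp: u norm_power_int)
  also have "\<dots> \<le> (\<Sum>i\<in>UNIV. \<bar>real_of_int (q $ i)\<bar> * cmod (1 - s $ i))"
    by (intro sum_mono unit_powi u)
  finally have 1: "cmod (1 - monom_pow s q) \<le> (\<Sum>i\<in>UNIV. \<bar>real_of_int (q $ i)\<bar> * cmod (1 - s $ i))" .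
  have "(cmod (1 - monom_pow s q))^2 \<le> (\<Sum>i\<in>UNIV. \<bar>real_of_int (q $ i)\<bar> * cmod (1 - s $ i))^2"
    using 1 by (intro power_mono) auto
  also have "\<dots> \<le> (\<Sum>i\<in>UNIV. \<bar>real_of_int (q $ i)\<bar>^2) * (\<Sum>i\<in>UNIV. (cmod (1 - s $ i))^2)"
    by (rule Cauchy_Schwarz_ineq_sum)
  also have "(\<Sum>i\<in>UNIV. (cmod (1 - s $ i))^2) = 2 * w s"
    unfolding w_def sum_distrib_left by (intro sum.cong refl) (simp add: unit_re[OF u])
  finally have "(cmod (1 - monom_pow s q))^2 \<le> (\<Sum>i\<in>UNIV. (real_of_int (q $ i))^2) * (2 * w s)"
    by simp
  then show ?thesis using unit_re[OF monom_norm[OF s, of q]] by simp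
qed

lemma w_nonneg: "s \<in> torus \<Longrightarrow> 0 \<le> w s"
  unfolding w_def torus_def
  by (intro sum_nonneg) (auto simp: abs_Re_le_cmod[THEN order_trans] intro: order_trans[OF complex_Re_le_cmod])

lemma w_le: "s \<in> torus \<Longrightarrow> w s \<le> real CARD('d) * norm (one_minus_re (s::complex^'d))"
proof -
  have "w s = (\<Sum>i\<in>UNIV. one_minus_re s $ i)" by (simp add: w_def one_minus_re_def)
  also have "\<dots> \<le> (\<Sum>i\<in>(UNIV::'d set). norm (one_minus_re s))"
    by (intro sum_mono) (metis abs_ge_self component_le_norm_cart order_trans)
  finally show ?thesis by simp
qed

lemma w_pos: "s \<in> torus \<Longrightarrow> s \<noteq> (\<chi> i. 1) \<Longrightarrow> 0 < w s"
proof (rule ccontr)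
  assume s: "s \<in> torus" "s \<noteq> (\<chi> i. 1)" "\<not> 0 < w s"
  have u: "norm (s $ i) = 1" for i using s by (simp add: torus_def)
  have nn: "0 \<le> 1 - Re (s $ i)" for i using complex_Re_le_cmod[of "s $ i"] u[of i] by simp
  have "w s = 0" using w_nonneg[OF s(1)] s(3) by simp
  then have "\<forall>i\<in>UNIV. 1 - Re (s $ i) = 0" unfolding w_def
    using sum_nonneg_eq_0_iff[of UNIV "\<lambda>i. 1 - Re (s $ i)"] nn by simp
  then have "s $ i = 1" for i using unit_re[OF u[of i]] by simp
  then show False using s(2) by (simp add: vec_eq_iff)
qed

lemma meas_w[measurable]: "w \<in> borel_measurable borel"
  unfolding w_def by measurable



lemma re_mult_re: "Re (x::complex) * Re y = (Re (x * y) + Re (x * cnj y)) / 2"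
  by (simp add: algebra_simps)

lemma w_identity:
  assumes s: "s \<in> torus"
  shows "w s * Re (monom_pow s p) = (\<Sum>j\<in>UNIV.
     (Re (1 - monom_pow s (p + axis j 1)) + Re (1 - monom_pow s (p - axis j 1))) / 2
      - Re (1 - monom_pow s p))"
proof -
  have "(Re (1 - monom_pow s (p + axis j 1)) + Re (1 - monom_pow s (p - axis j 1))) / 2
      - Re (1 - monom_pow s p) = (1 - Re (s $ j)) * Re (monom_pow s p)" for j
  proof -
    have "monom_pow s (p - axis j 1) = monom_pow s p * cnj (s $ j)"
      using monom_add[OF s, of p "- axis j 1"] monom_minus[OF s, of "axis j 1"]
      by (simp add: monom_axis)
    moreover have "monom_pow s (p + axis j 1) = monom_pow s p * s $ j"
      using monom_add[OF s, of p "axis j 1"] by (simp add: monom_axis)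
    ultimately show ?thesis using re_mult_re[of "monom_pow s p" "s $ j"]
      by (simp add: algebra_simps add_divide_distrib diff_divide_distrib)
  qed
  then show ?thesis by (simp add: w_def sum_distrib_right)
qed

lemma space_rho:
  assumes "sets \<rho> = sets (restrict_space borel torus)"
  shows "space \<rho> = torus"
  using sets_eq_imp_space_eq[OF assms] by (simp add: space_restrict_space)

lemma meas_rho:
  assumes "sets \<rho> = sets (restrict_space borel torus)" "f \<in> borel_measurable borel"
  shows "f \<in> borel_measurable \<rho>"
  using measurable_restrict_space1[OF assms(2), of torus] measurable_cong_sets[OF assms(1) refl]
  by blast

lemma phi_integrable:
  assumes S: "sets \<rho> = sets (restrict_space borel torus)"
    and I: "integrable \<rho> (\<lambda>s. norm (one_minus_re s))"
  shows "integrable \<rho> (\<lambda>s. Re (1 - monom_pow s (q::int^'d)))"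
proof -
  define Q where "Q = (\<Sum>i\<in>UNIV. (real_of_int (q $ i))^2) * real CARD('d)"
  show ?thesis
proof (rule Bochner_Integration.integrable_bound[where f="\<lambda>s. Q * norm (one_minus_re s)"])
  have Q: "Q \<ge> 0" unfolding Q_def by (intro mult_nonneg_nonneg sum_nonneg) auto
  show "integrable \<rho> (\<lambda>s. Q * norm (one_minus_re s))" using I by simp
  show "(\<lambda>s. Re (1 - monom_pow s q)) \<in> borel_measurable \<rho>"
    by (intro meas_rho[OF S]) measurable
  show "AE s in \<rho>. norm (Re (1 - monom_pow s q)) \<le> norm (Q * norm (one_minus_re s))"
  proof (intro AE_I2)
    fix s assume "s \<in> space \<rho>"
    then have s: "s \<in> torus" using space_rho[OF S] by simp
    have nn: "0 \<le> 1 - Re (monom_pow s q)"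
      using complex_Re_le_cmod[of "monom_pow s q"] monom_norm[OF s] by simp
    have "1 - Re (monom_pow s q) \<le> (\<Sum>i\<in>UNIV. (real_of_int (q $ i))^2) * w s"
      by (rule phi_bound[OF s])
    also have "\<dots> \<le> (\<Sum>i\<in>UNIV. (real_of_int (q $ i))^2) * (real CARD('d) * norm (one_minus_re s))"
      by (intro mult_left_mono w_le s sum_nonneg) auto
    finally show "norm (Re (1 - monom_pow s q)) \<le> norm (Q * norm (one_minus_re s))"
      using nn Q by (simp add: Q_def mult.assoc)
  qed
qed
qed

lemma w_integrable:
  assumes S: "sets \<rho> = sets (restrict_space borel torus)"
    and I: "integrable \<rho> (\<lambda>s. norm (one_minus_re s))"
  shows "integrable \<rho> (w :: complex^'d \<Rightarrow> real)"
proof (rule Bochner_Integration.integrable_bound[where f="\<lambda>s. real CARD('d) * norm (one_minus_re s)"])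
  show "integrable \<rho> (\<lambda>s. real CARD('d) * norm (one_minus_re s))" using I by simp
  show "w \<in> borel_measurable \<rho>" by (intro meas_rho[OF S]) measurable
  show "AE s in \<rho>. norm (w s) \<le> norm (real CARD('d) * norm (one_minus_re s))"
  proof (intro AE_I2)
    fix s assume "s \<in> space \<rho>"
    then have s: "s \<in> torus" using space_rho[OF S] by simp
    show "norm (w s) \<le> norm (real CARD('d) * norm (one_minus_re s))"
      using w_le[OF s] w_nonneg[OF s] by simp
  qed
qed

lemma nu_finite:
  assumes S: "sets \<rho> = sets (restrict_space borel torus)"
    and I: "integrable \<rho> (\<lambda>s. norm (one_minus_re s))"
  shows "finite_measure (density \<rho> (\<lambda>s. ennreal (w s)))"
proof
  have "emeasure (density \<rho> (\<lambda>s. ennreal (w s))) (space (density \<rho> (\<lambda>s. ennreal (w s))))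
      = (\<integral>\<^sup>+ s. ennreal (w s) \<partial>\<rho>)"
    by (subst emeasure_density) (auto intro!: meas_rho[OF S] nn_integral_cong simp: indicator_def)
  also have "\<dots> = ennreal (\<integral>s. w s \<partial>\<rho>)"
    by (intro nn_integral_eq_integral w_integrable[OF S I] AE_I2)
       (simp add: space_rho[OF S] w_nonneg)
  finally show "emeasure (density \<rho> (\<lambda>s. ennreal (w s))) (space (density \<rho> (\<lambda>s. ennreal (w s)))) \<noteq> \<infinity>"
    by simp
qed

lemma K_expr:
  assumes S: "sets \<rho> = sets (restrict_space borel torus)"
    and I: "integrable \<rho> (\<lambda>s. norm (one_minus_re s))"
  shows "(\<integral>s. Re (monom_pow s p) \<partial>density \<rho> (\<lambda>s. ennreal (w s))) =
    (\<Sum>j\<in>UNIV. ((\<integral>s. Re (1 - monom_pow s (p + axis j 1)) \<partial>\<rho>)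
       + (\<integral>s. Re (1 - monom_pow s (p - axis j 1)) \<partial>\<rho>)) / 2 - (\<integral>s. Re (1 - monom_pow s (p::int^'d)) \<partial>\<rho>))"
proof -
  note PI = phi_integrable[OF S I]
  have "(\<integral>s. Re (monom_pow s p) \<partial>density \<rho> (\<lambda>s. ennreal (w s))) = (\<integral>s. w s * Re (monom_pow s p) \<partial>\<rho>)"
    by (subst integral_density) (auto intro!: meas_rho[OF S] AE_I2 simp: space_rho[OF S] w_nonneg)
  also have "\<dots> = (\<integral>s. (\<Sum>j\<in>UNIV.
     (Re (1 - monom_pow s (p + axis j 1)) + Re (1 - monom_pow s (p - axis j 1))) / 2
      - Re (1 - monom_pow s p)) \<partial>\<rho>)"
    by (intro Bochner_Integration.integral_cong refl) (simp add: space_rho[OF S] w_identity)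
  also have "\<dots> = (\<Sum>j\<in>UNIV. (\<integral>s. (Re (1 - monom_pow s (p + axis j 1)) + Re (1 - monom_pow s (p - axis j 1))) / 2
      - Re (1 - monom_pow s p) \<partial>\<rho>))"
    by (intro Bochner_Integration.integral_sum) (intro Bochner_Integration.integrable_diff integrable_divide Bochner_Integration.integrable_add PI)
  also have "\<dots> = (\<Sum>j\<in>UNIV. ((\<integral>s. Re (1 - monom_pow s (p + axis j 1)) \<partial>\<rho>)
       + (\<integral>s. Re (1 - monom_pow s (p - axis j 1)) \<partial>\<rho>)) / 2 - (\<integral>s. Re (1 - monom_pow s (p::int^'d)) \<partial>\<rho>))"
  proof (intro sum.cong refl)
    fix j :: 'd
    show "(\<integral>s. (Re (1 - monom_pow s (p + axis j 1)) + Re (1 - monom_pow s (p - axis j 1))) / 2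
      - Re (1 - monom_pow s p) \<partial>\<rho>) = ((\<integral>s. Re (1 - monom_pow s (p + axis j 1)) \<partial>\<rho>)
       + (\<integral>s. Re (1 - monom_pow s (p - axis j 1)) \<partial>\<rho>)) / 2 - (\<integral>s. Re (1 - monom_pow s (p::int^'d)) \<partial>\<rho>)"
      by (simp add: Bochner_Integration.integral_diff Bochner_Integration.integral_add
          Bochner_Integration.integrable_add integrable_divide PI del: minus_complex.sel)
  qed
  finally show ?thesis .
qed



inductive_set tp :: "(complex ^ 'd \<Rightarrow> real) set" where
  gen: "(\<lambda>s. Re (c * monom_pow s p)) \<in> tp"
| add: "f \<in> tp \<Longrightarrow> g \<in> tp \<Longrightarrow> (\<lambda>s. f s + g s) \<in> tp"

lemma tp_gen_mult:
  fixes a b :: complex and p q :: "int^'d"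
  shows "\<exists>h\<in>tp. \<forall>s\<in>torus. Re (a * monom_pow s p) * Re (b * monom_pow s q) = h s"
proof (intro bexI ballI)
  fix s :: "complex^'d" assume s: "s \<in> torus"
  have 1: "a * monom_pow s p * (b * monom_pow s q) = (a * b) * monom_pow s (p + q)"
    by (simp add: monom_add[OF s])
  have m: "monom_pow s (p + - q) = monom_pow s p * cnj (monom_pow s q)"
    using monom_add[OF s, of p "-q"] monom_minus[OF s, of q] by simp
  have 2: "a * monom_pow s p * cnj (b * monom_pow s q) = (a * cnj b) * monom_pow s (p + - q)"
    unfolding m by simp
  show "Re (a * monom_pow s p) * Re (b * monom_pow s q) =
     Re ((a * b / 2) * monom_pow s (p + q)) + Re ((a * cnj b / 2) * monom_pow s (p + - q))"
  proof -
    have h: "Re ((c/2) * z) = Re (c * z) / 2" for c z :: complex by simp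
    show ?thesis unfolding re_mult_re 1 2 h by (simp add: add_divide_distrib)
  qed
qed (intro tp.add tp.gen)

lemma tp_add_aux:
  fixes X g1 g2 :: "complex^'d \<Rightarrow> real"
  assumes "h1 \<in> tp" "h2 \<in> tp" "\<forall>s\<in>torus. X s * g1 s = h1 s" "\<forall>s\<in>torus. X s * g2 s = h2 s"
  shows "\<exists>h\<in>tp. \<forall>s\<in>torus. X s * (g1 s + g2 s) = h s"
proof (intro bexI[OF _ tp.add[OF assms(1,2)]] ballI)
  fix s :: "complex^'d" assume "s \<in> torus"
  then show "X s * (g1 s + g2 s) = h1 s + h2 s" using assms(3,4) by (simp only: distrib_left)
qed

lemma tp_mult:
  assumes "f \<in> tp" "g \<in> tp"
  shows "\<exists>h\<in>tp. \<forall>s\<in>torus. f s * g s = h s"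
  using assms
proof (induction f rule: tp.induct)
  case (gen a p)
  from gen.prems show ?case
  proof (induction g rule: tp.induct)
    case (gen b q) then show ?case by (rule tp_gen_mult)
  next
    case (add g1 g2)
    then obtain h1 h2 where "h1 \<in> tp" "h2 \<in> tp" "\<forall>s\<in>torus. Re (a * monom_pow s p) * g1 s = h1 s"
      "\<forall>s\<in>torus. Re (a * monom_pow s p) * g2 s = h2 s" by blast
    then show ?case by (rule tp_add_aux)
  qed
next
  case (add f1 f2)
  then obtain h1 h2 where "h1 \<in> tp" "h2 \<in> tp" "\<forall>s\<in>torus. g s * f1 s = h1 s"
      "\<forall>s\<in>torus. g s * f2 s = h2 s" by (metis mult.commute)
  then have "\<exists>h\<in>tp. \<forall>s\<in>torus. g s * (f1 s + f2 s) = h s" by (rule tp_add_aux)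
  then show ?case by (metis mult.commute)
qed

lemma tp_meas: "f \<in> tp \<Longrightarrow> f \<in> borel_measurable borel"
  by (induction f rule: tp.induct) measurable

lemma tp_bounded: "f \<in> tp \<Longrightarrow> \<exists>B. \<forall>s\<in>torus. \<bar>f s\<bar> \<le> B"
proof (induction f rule: tp.induct)
  case (gen c p)
  have "\<bar>Re (c * monom_pow s p)\<bar> \<le> cmod c" if "s \<in> torus" for s
    using abs_Re_le_cmod[of "c * monom_pow s p"] monom_norm[OF that, of p] by (simp add: norm_mult)
  then show ?case by blast
next
  case (add f g)
  then obtain B1 B2 where "\<forall>s\<in>torus. \<bar>f s\<bar> \<le> B1" "\<forall>s\<in>torus. \<bar>g s\<bar> \<le> B2" by blast
  then have "\<forall>s\<in>torus. \<bar>f s + g s\<bar> \<le> B1 + B2" by (metis abs_triangle_ineq add_mono order_trans)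
  then show ?case by blast
qed

lemma integrable_torus:
  assumes F: "finite_measure \<nu>" and S: "sets \<nu> = sets (restrict_space borel torus)"
    and f: "f \<in> borel_measurable borel" and B: "\<forall>s\<in>torus. \<bar>f s :: real\<bar> \<le> B"
  shows "integrable \<nu> f"
proof -
  have "AE x in \<nu>. norm (f x) \<le> B" by (intro AE_I2) (simp add: space_rho[OF S] B)
  then show ?thesis using finite_measure.integrable_const_bound[OF F, of f B] meas_rho[OF S f]
    by blast
qed

lemma tp_sym:
  assumes "f \<in> tp"
  shows "(\<lambda>s. f s + f (cj s)) \<in> borel_measurable borel \<and> (\<exists>B. \<forall>s\<in>torus. \<bar>f s + f (cj s)\<bar> \<le> B)"
proof
  show "(\<lambda>s. f s + f (cj s)) \<in> borel_measurable borel"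
    using tp_meas[OF assms] by measurable
  obtain B where "\<forall>s\<in>torus. \<bar>f s\<bar> \<le> B" using tp_bounded[OF assms] by blast
  then have "\<forall>s\<in>torus. \<bar>f s + f (cj s)\<bar> \<le> B + B"
    by (metis abs_triangle_ineq add_mono order_trans cj_torus)
  then show "\<exists>B. \<forall>s\<in>torus. \<bar>f s + f (cj s)\<bar> \<le> B" by blast
qed

lemma tp_int:
  assumes F1: "finite_measure \<nu>1" and S1: "sets \<nu>1 = sets (restrict_space borel torus)"
    and F2: "finite_measure \<nu>2" and S2: "sets \<nu>2 = sets (restrict_space borel torus)"
    and K: "\<And>p. (\<integral>s. Re (monom_pow s p) \<partial>\<nu>1) = (\<integral>s. Re (monom_pow s p) \<partial>\<nu>2)"
    and f: "f \<in> tp"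
  shows "(\<integral>s. f s + f (cj s) \<partial>\<nu>1) = (\<integral>s. f s + f (cj s) \<partial>\<nu>2)"
  using f
proof (induction f rule: tp.induct)
  case (gen c p)
  have eq: "(\<lambda>s. Re (c * monom_pow s p) + Re (c * monom_pow (cj s) p)) = (\<lambda>s. (2 * Re c) * Re (monom_pow s p))"
    by (simp add: monom_cj algebra_simps)
  show ?case unfolding eq using K[of p] by simp
next
  case (add f g)
  have I: "integrable \<nu> (\<lambda>s. h s + h (cj s))" if "h \<in> tp" "finite_measure \<nu>"
      "sets \<nu> = sets (restrict_space borel torus)" for h and \<nu> :: "(complex^'d) measure"
    using tp_sym[OF that(1)] integrable_torus[OF that(2,3)] by blast
  have eq: "(\<lambda>s. f s + g s + (f (cj s) + g (cj s))) = (\<lambda>s. (f s + f (cj s)) + (g s + g (cj s)))"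
    by (simp add: algebra_simps)
  show ?case unfolding eq
    using add I[OF add.hyps(1) F1 S1] I[OF add.hyps(2) F1 S1] I[OF add.hyps(1) F2 S2] I[OF add.hyps(2) F2 S2]
    by (simp add: Bochner_Integration.integral_add)
qed

definition R_tp :: "(complex ^ 'd \<Rightarrow> real) set" where
  "R_tp = {f. continuous_on torus f \<and> (\<exists>g\<in>tp. \<forall>s\<in>torus. f s = g s)}"

lemma R_tp_ring: "function_ring_on (R_tp :: (complex^'d \<Rightarrow> real) set) torus"
proof
  show "compact torus" by (rule compact_torus)
next
  fix f :: "complex^'d \<Rightarrow> real" assume "f \<in> R_tp" then show "continuous_on torus f" by (simp add: R_tp_def)
next
  fix f g :: "complex^'d \<Rightarrow> real" assume "f \<in> R_tp" "g \<in> R_tp"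
  then obtain f' g' where fg: "f' \<in> tp" "g' \<in> tp" "\<forall>s\<in>torus. f s = f' s" "\<forall>s\<in>torus. g s = g' s"
    "continuous_on torus f" "continuous_on torus g" by (auto simp: R_tp_def)
  then show "(\<lambda>x. f x + g x) \<in> R_tp"
    unfolding R_tp_def
    by (intro CollectI conjI continuous_on_add bexI[OF _ tp.add[OF fg(1,2)]]) auto
next
  fix f g :: "complex^'d \<Rightarrow> real" assume "f \<in> R_tp" "g \<in> R_tp"
  then obtain f' g' where fg: "f' \<in> tp" "g' \<in> tp" "\<forall>s\<in>torus. f s = f' s" "\<forall>s\<in>torus. g s = g' s"
    "continuous_on torus f" "continuous_on torus g" by (auto simp: R_tp_def)
  then obtain h where h: "h \<in> tp" "\<forall>s\<in>torus. f' s * g' s = h s" using tp_mult by blast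
  have "continuous_on torus (\<lambda>x. f x * g x)" by (intro continuous_intros fg)
  moreover have "\<forall>s\<in>torus. f s * g s = h s" using fg h by simp
  ultimately show "(\<lambda>x. f x * g x) \<in> R_tp"
    unfolding R_tp_def using h by blast
next
  fix c :: real
  show "(\<lambda>_. c) \<in> R_tp" unfolding R_tp_def
    by (intro CollectI conjI continuous_on_const bexI[OF _ tp.gen[of "complex_of_real c" 0]]) simp
next
  fix x y :: "complex^'d" assume "x \<in> torus" "y \<in> torus" "x \<noteq> y"
  then obtain i where i: "x $ i \<noteq> y $ i" by (auto simp: vec_eq_iff)
  have cont: "continuous_on torus (\<lambda>s::complex^'d. Re (s $ i))" "continuous_on torus (\<lambda>s::complex^'d. Im (s $ i))"
    by (intro continuous_on_Re continuous_on_Im continuous_on_component continuous_on_id)+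
  have tp1: "(\<lambda>s. Re (1 * monom_pow s (axis i 1))) \<in> (tp :: (complex^'d \<Rightarrow> real) set)" by (rule tp.gen)
  have tp2: "(\<lambda>s. Re (- \<i> * monom_pow s (axis i 1))) \<in> (tp :: (complex^'d \<Rightarrow> real) set)" by (rule tp.gen)
  have in1: "(\<lambda>s::complex^'d. Re (s $ i)) \<in> R_tp" unfolding R_tp_def
    by (intro CollectI conjI cont(1) bexI[OF _ tp1]) (simp add: monom_axis)
  have in2: "(\<lambda>s::complex^'d. Im (s $ i)) \<in> R_tp" unfolding R_tp_def
    by (intro CollectI conjI cont(2) bexI[OF _ tp2]) (simp add: monom_axis)
  show "\<exists>f\<in>R_tp. f x \<noteq> f y"
  proof (cases "Re (x $ i) = Re (y $ i)")
    case True
    then have "Im (x $ i) \<noteq> Im (y $ i)" using i True complex_eqI by metis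
    then show ?thesis using in2 by (intro bexI[of _ "\<lambda>s. Im (s $ i)"])
  next
    case False then show ?thesis using in1 by (intro bexI[of _ "\<lambda>s. Re (s $ i)"])
  qed
qed



lemma approx_zero_real:
  fixes x C :: real
  assumes C: "C \<ge> 0" and H: "\<And>e. e > 0 \<Longrightarrow> \<bar>x\<bar> \<le> e * C"
  shows "x = 0"
proof (rule ccontr)
  assume "x \<noteq> 0"
  then have "\<bar>x\<bar> > 0" by simp
  define e where "e = \<bar>x\<bar> / (2 * (C + 1))"
  have e: "e > 0" using \<open>\<bar>x\<bar> > 0\<close> C by (simp add: e_def)
  have "\<bar>x\<bar> \<le> e * C" by (rule H[OF e])
  also have "e * C < e * (2 * (C + 1))" using e C by (intro mult_strict_left_mono) auto
  also have "e * (2 * (C + 1)) = \<bar>x\<bar>" using C by (simp add: e_def)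
  finally show False by simp
qed

lemma sets_torus_sub:
  assumes S: "sets \<nu> = sets (restrict_space borel torus)" and A: "A \<in> sets borel" "A \<subseteq> torus"
  shows "A \<in> sets \<nu>"
proof -
  have "A = torus \<inter> A" using A by blast
  then show ?thesis unfolding S sets_restrict_space using A(1) by blast
qed

lemma cont_meas:
  assumes S: "sets \<nu> = sets (restrict_space borel torus)" and f: "continuous_on torus f"
  shows "f \<in> borel_measurable \<nu>"
  using borel_measurable_continuous_on_restrict[OF f] measurable_cong_sets[OF S refl] by blast

lemma cont_integrable:
  assumes F: "finite_measure \<nu>" and S: "sets \<nu> = sets (restrict_space borel torus)"
    and f: "continuous_on torus (f :: complex^'d \<Rightarrow> real)"
  shows "integrable \<nu> f"
proof -
  have "compact (f ` torus)" by (rule compact_continuous_image[OF f compact_torus])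
  then obtain B where B: "\<forall>y\<in>f ` torus. norm y \<le> B" using compact_imp_bounded bounded_iff by metis
  have "AE x in \<nu>. norm (f x) \<le> B" by (intro AE_I2) (use B in \<open>simp add: space_rho[OF S]\<close>)
  then show ?thesis using finite_measure.integrable_const_bound[OF F, of f B] cont_meas[OF S f]
    by blast
qed

lemma int_close:
  assumes F: "finite_measure \<nu>" and S: "sets \<nu> = sets (restrict_space borel torus)"
    and f: "integrable \<nu> f" and h: "integrable \<nu> h"
    and close: "\<forall>s\<in>torus. \<bar>f s - h s\<bar> \<le> (e::real)"
  shows "\<bar>(\<integral>s. f s \<partial>\<nu>) - (\<integral>s. h s \<partial>\<nu>)\<bar> \<le> e * measure \<nu> (space \<nu>)"
proof -
  have "\<bar>(\<integral>s. f s - h s \<partial>\<nu>)\<bar> \<le> (\<integral>s. e \<partial>\<nu>)"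
    by (intro integral_abs_bound_integral Bochner_Integration.integrable_diff f h
        finite_measure.integrable_const[OF F]) (simp add: space_rho[OF S] close)
  then show ?thesis using f h by (simp add: Bochner_Integration.integral_diff mult.commute)
qed

lemma even_int:
  fixes \<nu>1 \<nu>2 :: "(complex^'d) measure" and f :: "complex^'d \<Rightarrow> real"
  assumes F1: "finite_measure \<nu>1" and S1: "sets \<nu>1 = sets (restrict_space borel torus)"
    and F2: "finite_measure \<nu>2" and S2: "sets \<nu>2 = sets (restrict_space borel torus)"
    and K: "\<And>p. (\<integral>s. Re (monom_pow s p) \<partial>\<nu>1) = (\<integral>s. Re (monom_pow s p) \<partial>\<nu>2)"
    and f: "continuous_on torus f" and ev: "\<forall>s\<in>torus. f (cj s) = f s"
  shows "(\<integral>s. f s \<partial>\<nu>1) = (\<integral>s. f s \<partial>\<nu>2)"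
proof -
  interpret function_ring_on "R_tp :: (complex^'d \<Rightarrow> real) set" torus by (rule R_tp_ring)
  let ?C = "measure \<nu>1 (space \<nu>1) + measure \<nu>2 (space \<nu>2)"
  have H: "\<bar>(\<integral>s. f s \<partial>\<nu>1) - (\<integral>s. f s \<partial>\<nu>2)\<bar> \<le> e * ?C" if e: "e > 0" for e :: real
  proof -
    obtain g where g: "g \<in> R_tp" "\<forall>x\<in>torus. \<bar>f x - g x\<bar> < e"
      using Stone_Weierstrass_basic[OF f e] by blast
    obtain g0 where g0: "g0 \<in> tp" "\<forall>s\<in>torus. g s = g0 s" using g(1) by (auto simp: R_tp_def)
    define h where "h s = (g0 s + g0 (cj s)) / 2" for s
    obtain B where B: "\<forall>s\<in>torus. \<bar>g0 s + g0 (cj s)\<bar> \<le> B" and hm: "(\<lambda>s. g0 s + g0 (cj s)) \<in> borel_measurable borel"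
      using tp_sym[OF g0(1)] by blast
    have hI: "integrable \<nu> h" if "finite_measure \<nu>" "sets \<nu> = sets (restrict_space borel torus)" for \<nu>
      unfolding h_def by (intro integrable_divide integrable_torus[OF that hm B])
    have hE: "(\<integral>s. h s \<partial>\<nu>1) = (\<integral>s. h s \<partial>\<nu>2)"
      unfolding h_def using tp_int[OF F1 S1 F2 S2 K g0(1)] by simp
    have cl: "\<forall>s\<in>torus. \<bar>f s - h s\<bar> \<le> e"
    proof
      fix s :: "complex^'d" assume s: "s \<in> torus"
      have 1: "\<bar>f s - g0 s\<bar> < e" using g(2) g0(2) s by auto
      have 2: "\<bar>f (cj s) - g0 (cj s)\<bar> < e" using g(2) g0(2) cj_torus[OF s] by auto
      have fe: "f (cj s) = f s" using ev s by simp
      have a: "f s - g0 s < e" "g0 s - f s < e" "f s - g0 (cj s) < e" "g0 (cj s) - f s < e"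
        using 1 2 fe by (auto simp: abs_less_iff)
      have b1: "f s - h s \<le> e" unfolding h_def using a by (simp add: field_simps)
      have b2: "h s - f s \<le> e" unfolding h_def using a by (simp add: field_simps)
      show "\<bar>f s - h s\<bar> \<le> e" using b1 b2 by (simp add: abs_le_iff)
    qed
    have a1: "\<bar>(\<integral>s. f s \<partial>\<nu>1) - (\<integral>s. h s \<partial>\<nu>1)\<bar> \<le> e * measure \<nu>1 (space \<nu>1)"
      by (rule int_close[OF F1 S1 cont_integrable[OF F1 S1 f] hI[OF F1 S1] cl])
    have a2: "\<bar>(\<integral>s. f s \<partial>\<nu>2) - (\<integral>s. h s \<partial>\<nu>2)\<bar> \<le> e * measure \<nu>2 (space \<nu>2)"
      by (rule int_close[OF F2 S2 cont_integrable[OF F2 S2 f] hI[OF F2 S2] cl])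
    show "\<bar>(\<integral>s. f s \<partial>\<nu>1) - (\<integral>s. f s \<partial>\<nu>2)\<bar> \<le> e * ?C"
      using a1 a2 hE by (simp add: distrib_left abs_le_iff)
  qed
  have "?C \<ge> 0" by simp
  from approx_zero_real[OF this H] show ?thesis by simp
qed



lemma sets_char: "A \<in> sets (restrict_space borel torus) \<longleftrightarrow> A \<in> sets borel \<and> A \<subseteq> torus"
  unfolding sets_restrict_space by auto

lemma cj_sets:
  assumes "A \<in> sets (restrict_space borel torus)"
  shows "cj ` A \<in> sets (restrict_space borel torus)"
proof -
  have A: "A \<in> sets borel" "A \<subseteq> torus" using assms sets_char by auto
  have "cj -` A \<in> sets borel" using measurable_sets_borel[OF meas_cj A(1)] .
  moreover have "cj ` A \<subseteq> torus" using A(2) cj_torus by auto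
  ultimately show ?thesis unfolding sets_char cj_image_eq_vimage by simp
qed

lemma fn_lim:
  assumes F: "closed F" "F \<noteq> {}"
  shows "(\<lambda>n. max 0 (1 - real n * infdist s F)) \<longlonglongrightarrow> indicator F s"
proof (cases "s \<in> F")
  case True
  then show ?thesis by simp
next
  case False
  have d: "infdist s F > 0"
    using in_closed_iff_infdist_zero[OF F, of s] False infdist_nonneg[of s F] by simp
  obtain N :: nat where N: "1 < real N * infdist s F" using ex_less_of_nat_mult[OF d] by blast
  have "eventually (\<lambda>n. max 0 (1 - real n * infdist s F) = indicator F s) sequentially"
    unfolding eventually_sequentially
  proof (intro exI allI impI)
    fix n assume "N \<le> n"
    then have "real N * infdist s F \<le> real n * infdist s F" using d by (intro mult_right_mono) auto
    then show "max 0 (1 - real n * infdist s F) = indicator F s" using N False by simp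
  qed
  then show ?thesis by (rule tendsto_eventually)
qed

lemma closed_eq:
  fixes \<nu>1 \<nu>2 :: "(complex^'d) measure"
  assumes F1: "finite_measure \<nu>1" and S1: "sets \<nu>1 = sets (restrict_space borel torus)"
    and F2: "finite_measure \<nu>2" and S2: "sets \<nu>2 = sets (restrict_space borel torus)"
    and K: "\<And>p. (\<integral>s. Re (monom_pow s p) \<partial>\<nu>1) = (\<integral>s. Re (monom_pow s p) \<partial>\<nu>2)"
    and F: "closed F" "F \<subseteq> torus"
  shows "measure \<nu>1 F + measure \<nu>1 (cj ` F) = measure \<nu>2 F + measure \<nu>2 (cj ` F)"
proof (cases "F = {}")
  case True then show ?thesis by simp
next
  case False
  define fn where "fn n s = max 0 (1 - real n * infdist s F)" for n :: nat and s :: "complex^'d"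
  define gn where "gn n s = fn n s + fn n (cj s)" for n s
  have FS: "F \<in> sets (restrict_space borel torus)" using F by (simp add: sets_char borel_closed)
  have cFS: "cj ` F \<in> sets (restrict_space borel torus)" by (rule cj_sets[OF FS])
  have cont: "continuous_on torus (gn n)" for n
    unfolding gn_def fn_def
    by (intro continuous_on_add continuous_on_max continuous_on_const continuous_on_diff
        continuous_on_mult continuous_on_infdist continuous_on_id continuous_cj)
  have ev: "\<forall>s\<in>torus. gn n (cj s) = gn n s" for n by (simp add: gn_def)
  have ind: "indicator (cj ` F) s = (indicator F (cj s) :: real)" for s
    by (simp add: cj_image_eq_vimage indicator_def)
  have lim: "(\<lambda>n. gn n s) \<longlonglongrightarrow> indicator F s + indicator (cj ` F) s" for s
    unfolding gn_def fn_def ind by (intro tendsto_add fn_lim F(1) False)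
  have bnd: "norm (gn n s) \<le> 2" for n s
  proof -
    have "0 \<le> fn n t" "fn n t \<le> 1" for t using infdist_nonneg[of t F] by (auto simp: fn_def)
    then show ?thesis unfolding gn_def by (smt (verit) real_norm_def)
  qed
  have conv: "(\<lambda>n. \<integral>s. gn n s \<partial>\<nu>) \<longlonglongrightarrow> measure \<nu> F + measure \<nu> (cj ` F)"
    if Fn: "finite_measure \<nu>" and Sn: "sets \<nu> = sets (restrict_space borel torus)" for \<nu> :: "(complex^'d) measure"
  proof -
    have FS': "F \<in> sets \<nu>" "cj ` F \<in> sets \<nu>" using FS cFS Sn by auto
    have fin: "emeasure \<nu> A < \<infinity>" for A using finite_measure.emeasure_finite[OF Fn, of A] by (simp add: top.not_eq_extremum)
    have li: "integrable \<nu> (\<lambda>s. indicator F s + indicator (cj ` F) s :: real)"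
      using FS' fin by (intro Bochner_Integration.integrable_add integrable_real_indicator)
    have "(\<lambda>n. \<integral>s. gn n s \<partial>\<nu>) \<longlonglongrightarrow> (\<integral>s. indicator F s + indicator (cj ` F) s \<partial>\<nu>)"
    proof (rule integral_dominated_convergence[where w="\<lambda>_. 2"])
      show "(\<lambda>s. indicator F s + indicator (cj ` F) s :: real) \<in> borel_measurable \<nu>"
        using li by blast
      show "gn n \<in> borel_measurable \<nu>" for n by (rule cont_meas[OF Sn cont])
      show "integrable \<nu> (\<lambda>_. 2 :: real)" using finite_measure.integrable_const[OF Fn] .
      show "AE s in \<nu>. (\<lambda>n. gn n s) \<longlonglongrightarrow> indicator F s + indicator (cj ` F) s" using lim by simp
      show "AE s in \<nu>. norm (gn n s) \<le> 2" for n using bnd by simp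
    qed
    also have "(\<integral>s. indicator F s + indicator (cj ` F) s \<partial>\<nu>) = measure \<nu> F + measure \<nu> (cj ` F)"
    proof -
      have sp: "space \<nu> = torus" by (rule space_rho[OF Sn])
      have "cj ` F \<subseteq> torus" using F(2) cj_torus by auto
      then show ?thesis using FS' fin F(2) sp
        by (simp add: Bochner_Integration.integral_add integrable_real_indicator Int_absorb2)
    qed
    finally show ?thesis .
  qed
  have "(\<lambda>n. \<integral>s. gn n s \<partial>\<nu>1) = (\<lambda>n. \<integral>s. gn n s \<partial>\<nu>2)"
    using even_int[OF F1 S1 F2 S2 K cont ev] by simp
  then show ?thesis using conv[OF F1 S1] conv[OF F2 S2] LIMSEQ_unique by metis
qed



lemma sigma_torus:
  "sets (restrict_space borel torus) = sigma_sets torus {F. closed F \<and> F \<subseteq> (torus :: (complex^'d) set)}"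
proof -
  have sb: "sets (borel :: (complex^'d) measure) = sigma_sets UNIV (Collect closed)"
    unfolding borel_eq_closed by (rule sets_measure_of) simp
  have tin: "(torus :: (complex^'d) set) \<in> sigma_sets UNIV (Collect closed)"
    using closed_torus by (intro sigma_sets.Basic) simp
  have eqG: "(\<inter>) torus ` Collect closed = {F. closed F \<and> F \<subseteq> (torus :: (complex^'d) set)}"
  proof (intro equalityI subsetI)
    fix x assume "x \<in> (\<inter>) (torus :: (complex^'d) set) ` Collect closed"
    then show "x \<in> {F. closed F \<and> F \<subseteq> torus}" using closed_torus by auto
  next
    fix x assume "x \<in> {F. closed F \<and> F \<subseteq> (torus :: (complex^'d) set)}"
    then have "x = torus \<inter> x" "closed x" by auto
    then show "x \<in> (\<inter>) torus ` Collect closed" by blast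
  qed
  show ?thesis unfolding sets_restrict_space sb sigma_sets_Int[OF tin subset_UNIV] eqG ..
qed

lemma all_eq:
  fixes \<nu>1 \<nu>2 :: "(complex^'d) measure"
  assumes F1: "finite_measure \<nu>1" and S1: "sets \<nu>1 = sets (restrict_space borel torus)"
    and F2: "finite_measure \<nu>2" and S2: "sets \<nu>2 = sets (restrict_space borel torus)"
    and K: "\<And>p. (\<integral>s. Re (monom_pow s p) \<partial>\<nu>1) = (\<integral>s. Re (monom_pow s p) \<partial>\<nu>2)"
    and A: "A \<in> sets (restrict_space borel torus)"
  shows "measure \<nu>1 A + measure \<nu>1 (cj ` A) = measure \<nu>2 A + measure \<nu>2 (cj ` A)"
proof -
  let ?G = "{F. closed F \<and> F \<subseteq> (torus :: (complex^'d) set)}"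
  have IS: "Int_stable ?G" unfolding Int_stable_def by auto
  have GP: "?G \<subseteq> Pow torus" by auto
  have A': "A \<in> sigma_sets torus ?G" using A sigma_torus by blast
  have inS: "B \<in> sets \<nu>1" "B \<in> sets \<nu>2" "cj ` B \<in> sets \<nu>1" "cj ` B \<in> sets \<nu>2"
    if "B \<in> sigma_sets torus ?G" for B
    using that cj_sets[of B] S1 S2 sigma_torus by auto
  from IS GP A' show ?thesis
  proof (induction A rule: sigma_sets_induct_disjoint)
    case (basic A)
    then show ?case using closed_eq[OF F1 S1 F2 S2 K] by blast
  next
    case empty
    then show ?case by simp
  next
    case (compl A)
    have AT: "A \<subseteq> torus" using compl.hyps sigma_sets_into_sp[OF GP] by blast
    have cAT: "cj ` A \<subseteq> torus" using AT cj_torus by auto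
    have cT: "cj ` (torus :: (complex^'d) set) = torus" by (rule cj_image_torus)
    have ci: "cj ` (torus - A) = torus - cj ` A"
      using image_set_diff[OF cj_inj, of torus A] cT by simp
    have T: "torus \<in> sigma_sets torus ?G" using closed_torus by (intro sigma_sets.Basic) auto
    have PT: "measure \<nu>1 torus + measure \<nu>1 (cj ` torus) = measure \<nu>2 torus + measure \<nu>2 (cj ` torus)"
      using closed_eq[OF F1 S1 F2 S2 K closed_torus] by simp
    note i = inS[OF compl.hyps] inS[OF T]
    show ?case unfolding ci
      using compl.IH PT i AT cAT cT
      by (simp add: finite_measure.finite_measure_Diff[OF F1] finite_measure.finite_measure_Diff[OF F2])
  next
    case (union A)
    have dj: "disjoint_family (\<lambda>i. cj ` A i)"
      using union.hyps(1) cj_inj unfolding disjoint_family_on_def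
      by (metis image_Int image_empty inj_on_subset subset_UNIV)
    have r1: "range A \<subseteq> sets \<nu>1" "range (\<lambda>i. cj ` A i) \<subseteq> sets \<nu>1"
      "range A \<subseteq> sets \<nu>2" "range (\<lambda>i. cj ` A i) \<subseteq> sets \<nu>2"
      using inS union.hyps(2) by auto
    have u: "cj ` (\<Union>i. A i) = (\<Union>i. cj ` A i)" by auto
    have s1: "(\<lambda>i. measure \<nu>1 (A i) + measure \<nu>1 (cj ` A i)) sums (measure \<nu>1 (\<Union>i. A i) + measure \<nu>1 (cj ` (\<Union>i. A i)))"
      unfolding u by (intro sums_add finite_measure.finite_measure_UNION[OF F1] r1 union.hyps(1) dj)
    have s2: "(\<lambda>i. measure \<nu>2 (A i) + measure \<nu>2 (cj ` A i)) sums (measure \<nu>2 (\<Union>i. A i) + measure \<nu>2 (cj ` (\<Union>i. A i)))"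
      unfolding u by (intro sums_add finite_measure.finite_measure_UNION[OF F2] r1 union.hyps(1) dj)
    show ?case using s1 s2 union.IH sums_unique2 by simp
  qed
qed



lemma invariant_vimage:
  assumes "\<And>s. h (cj s) = h s"
  shows "cj ` (h -` U \<inter> torus) = h -` U \<inter> torus"
proof -
  have "cj ` (torus :: (complex^'d) set) = torus" by (rule cj_image_torus)
  then have "cj -` (torus :: (complex^'d) set) = torus" by (simp add: cj_image_eq_vimage)
  then show ?thesis unfolding cj_image_eq_vimage using assms by auto
qed

lemma even_sigma:
  "sigma_algebra (torus :: (complex^'d) set) {A. A \<in> sets (restrict_space borel torus) \<and> cj ` A = A}"
proof -
  have cT: "cj ` (torus :: (complex^'d) set) = torus" by (rule cj_image_torus)
  show ?thesis
  unfolding sigma_algebra_iff2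
  proof (intro conjI ballI allI impI)
    show "{A. A \<in> sets (restrict_space borel torus) \<and> cj ` A = A} \<subseteq> Pow (torus :: (complex^'d) set)"
      by (auto simp: sets_char)
    show "{} \<in> {A. A \<in> sets (restrict_space borel torus) \<and> cj ` A = A}" by simp
  next
    fix s :: "(complex^'d) set" assume s: "s \<in> {A. A \<in> sets (restrict_space borel torus) \<and> cj ` A = A}"
    then have "cj ` (torus - s) = torus - s" using image_set_diff[OF cj_inj, of torus s] cT by simp
    moreover have "torus - s \<in> sets (restrict_space borel torus)" using s by (auto simp: sets_char)
    ultimately show "torus - s \<in> {A. A \<in> sets (restrict_space borel torus) \<and> cj ` A = A}" by simp
  next
    fix A :: "nat \<Rightarrow> (complex^'d) set"
    assume A: "range A \<subseteq> {A. A \<in> sets (restrict_space borel torus) \<and> cj ` A = A}"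
    then have "(\<Union>i. A i) \<in> sets (restrict_space borel torus)" by (intro sets.countable_UN) auto
    moreover have "cj ` (\<Union>i. A i) = (\<Union>i. A i)"
    proof -
      have "\<And>i. cj ` A i = A i" using A by auto
      then show ?thesis by (simp add: image_UN)
    qed
    ultimately show "(\<Union>i. A i) \<in> {A. A \<in> sets (restrict_space borel torus) \<and> cj ` A = A}" by simp
  qed
qed

theorem lemma6p1:
  fixes \<rho>1 \<rho>2 :: "(complex ^ 'd) measure"
  assumes sets1: "sets \<rho>1 = sets (restrict_space borel torus)"
    and sets2: "sets \<rho>2 = sets (restrict_space borel torus)"
    and one1: "emeasure \<rho>1 {\<chi> i. 1} = 0"
    and one2: "emeasure \<rho>2 {\<chi> i. 1} = 0"
    and int1: "integrable \<rho>1 (\<lambda>s. norm (one_minus_re s))"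
    and int2: "integrable \<rho>2 (\<lambda>s. norm (one_minus_re s))"
    and eq: "\<And>p :: int ^ 'd.
      (\<integral>s. Re (1 - monom_pow s p) \<partial>\<rho>1) = (\<integral>s. Re (1 - monom_pow s p) \<partial>\<rho>2)"
    and B: "even_borel B"
  shows "emeasure \<rho>1 B = emeasure \<rho>2 B"
proof -
  define \<nu>1 where "\<nu>1 = density \<rho>1 (\<lambda>s. ennreal (w s))"
  define \<nu>2 where "\<nu>2 = density \<rho>2 (\<lambda>s. ennreal (w s))"
  have F1: "finite_measure \<nu>1" unfolding \<nu>1_def by (rule nu_finite[OF sets1 int1])
  have F2: "finite_measure \<nu>2" unfolding \<nu>2_def by (rule nu_finite[OF sets2 int2])
  have S1: "sets \<nu>1 = sets (restrict_space borel torus)" unfolding \<nu>1_def using sets1 by simp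
  have S2: "sets \<nu>2 = sets (restrict_space borel torus)" unfolding \<nu>2_def using sets2 by simp
  have K: "(\<integral>s. Re (monom_pow s p) \<partial>\<nu>1) = (\<integral>s. Re (monom_pow s p) \<partial>\<nu>2)" for p
    unfolding \<nu>1_def \<nu>2_def K_expr[OF sets1 int1] K_expr[OF sets2 int2] eq ..
  have Bt: "B \<subseteq> torus" "B \<in> sets borel" "tinv ` B = B" using B by (auto simp: even_borel_def)
  have cB: "cj ` B = B"
  proof -
    have "cj ` B = tinv ` B" by (intro image_cong refl) (simp add: tinv_cj subsetD[OF Bt(1)])
    then show ?thesis using Bt(3) by simp
  qed
  let ?E = "{A. A \<in> sets (restrict_space borel torus) \<and> cj ` A = (A :: (complex^'d) set)}"
  have SA: "sigma_algebra torus ?E" by (rule even_sigma)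
  have nuE: "emeasure \<nu>1 A = emeasure \<nu>2 A" if "A \<in> ?E" for A
  proof -
    have "measure \<nu>1 A + measure \<nu>1 (cj ` A) = measure \<nu>2 A + measure \<nu>2 (cj ` A)"
      using that all_eq[OF F1 S1 F2 S2 K] by blast
    then have "measure \<nu>1 A = measure \<nu>2 A" using that by simp
    then show ?thesis
      by (simp add: finite_measure.emeasure_eq_measure[OF F1] finite_measure.emeasure_eq_measure[OF F2])
  qed
  define M' where "M' = measure_of torus ?E (\<lambda>_. 0)"
  have sM': "sets M' = ?E" unfolding M'_def by (rule sigma_algebra.sets_measure_of_eq[OF SA])
  have spM': "space M' = torus" unfolding M'_def by (rule sigma_algebra.space_measure_of_eq[OF SA])
  have idm: "(\<lambda>x. x) \<in> measurable \<nu> M'" if "sets \<nu> = sets (restrict_space borel torus)" for \<nu> :: "(complex^'d) measure"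
  proof (rule measurableI)
    fix x assume "x \<in> space \<nu>" then show "x \<in> space M'" using space_rho[OF that] spM' by simp
  next
    fix A assume "A \<in> sets M'"
    then have "A \<in> sets (restrict_space borel torus)" using sM' by auto
    then show "(\<lambda>x. x) -` A \<inter> space \<nu> \<in> sets \<nu>" using that space_rho[OF that] by (auto simp: sets_char Int_absorb2)
  qed
  have deq: "distr \<nu>1 M' (\<lambda>x. x) = distr \<nu>2 M' (\<lambda>x. x)"
  proof (rule measure_eqI)
    show "sets (distr \<nu>1 M' (\<lambda>x. x)) = sets (distr \<nu>2 M' (\<lambda>x. x))" by simp
  next
    fix A assume "A \<in> sets (distr \<nu>1 M' (\<lambda>x. x))"
    then have A: "A \<in> ?E" using sM' by simp
    then have "A \<subseteq> torus" by (auto simp: sets_char)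
    then show "emeasure (distr \<nu>1 M' (\<lambda>x. x)) A = emeasure (distr \<nu>2 M' (\<lambda>x. x)) A"
      using A nuE[OF A] sM' idm[OF S1] idm[OF S2]
      by (simp add: emeasure_distr space_rho[OF S1] space_rho[OF S2] Int_absorb2)
  qed
  define h where "h s = ennreal (1 / w s) * indicator (B - {\<chi> i. 1}) s" for s :: "complex^'d"
  have Bm[measurable]: "B \<in> sets borel" by (rule Bt(2))
  have hb: "h \<in> borel_measurable borel" unfolding h_def by measurable
  have cj1: "cj (\<chi> i. 1) = (\<chi> i. 1 :: complex^'d)" by (simp add: vec_eq_iff)
  have hinv: "h (cj s) = h s" for s
  proof -
    have "w (cj s) = w s" by (simp add: w_def)
    moreover have "cj s \<in> B - {\<chi> i. 1} \<longleftrightarrow> s \<in> B - {\<chi> i. 1}"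
      using cB cj1 by (metis Diff_iff cj_cj cj_image_eq_vimage insert_iff singletonD vimage_eq)
    ultimately show ?thesis by (simp add: h_def indicator_def)
  qed
  have hM': "h \<in> borel_measurable M'"
  proof (rule measurableI)
    fix x show "h x \<in> space borel" by simp
  next
    fix U :: "ennreal set" assume U: "U \<in> sets borel"
    have "h -` U \<inter> torus \<in> sets (restrict_space borel torus)"
      using measurable_sets_borel[OF hb U] by (auto simp: sets_char)
    then show "h -` U \<inter> space M' \<in> sets M'" unfolding sM' spM'
      using invariant_vimage[of h U, OF hinv] by simp
  qed
  have hdistr: "(\<integral>\<^sup>+ s. h s \<partial>\<nu>1) = (\<integral>\<^sup>+ s. h s \<partial>\<nu>2)"
  proof -
    have "(\<integral>\<^sup>+ s. h s \<partial>\<nu>1) = (\<integral>\<^sup>+ s. h s \<partial>distr \<nu>1 M' (\<lambda>x. x))"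
      using hM' by (subst nn_integral_distr[OF idm[OF S1]]) auto
    also have "\<dots> = (\<integral>\<^sup>+ s. h s \<partial>distr \<nu>2 M' (\<lambda>x. x))" unfolding deq ..
    also have "\<dots> = (\<integral>\<^sup>+ s. h s \<partial>\<nu>2)"
      using hM' by (subst nn_integral_distr[OF idm[OF S2]]) auto
    finally show ?thesis .
  qed
  have rho_eq: "(\<integral>\<^sup>+ s. h s \<partial>density \<rho> (\<lambda>s. ennreal (w s))) = emeasure \<rho> B"
    if S: "sets \<rho> = sets (restrict_space borel torus)" and one: "emeasure \<rho> {\<chi> i. 1} = 0" for \<rho>
  proof -
    have "(\<integral>\<^sup>+ s. h s \<partial>density \<rho> (\<lambda>s. ennreal (w s))) = (\<integral>\<^sup>+ s. ennreal (w s) * h s \<partial>\<rho>)"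
      by (intro nn_integral_density meas_rho[OF S]) (use hb in measurable)
    also have "\<dots> = (\<integral>\<^sup>+ s. indicator (B - {\<chi> i. 1}) s \<partial>\<rho>)"
    proof (intro nn_integral_cong)
      fix s assume "s \<in> space \<rho>"
      then have s: "s \<in> torus" using space_rho[OF S] by simp
      show "ennreal (w s) * h s = indicator (B - {\<chi> i. 1}) s"
      proof (cases "s \<in> B - {\<chi> i. 1}")
        case True
        then have "0 < w s" using w_pos[OF s] by auto
        then have "ennreal (w s) * ennreal (1 / w s) = 1"
          by (simp add: ennreal_mult[symmetric])
        then show ?thesis using True by (simp add: h_def)
      next
        case False then show ?thesis by (simp add: h_def)
      qed
    qed
    also have "\<dots> = emeasure \<rho> (B - {\<chi> i. 1})"
    proof (rule nn_integral_indicator)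
      show "B - {\<chi> i. 1} \<in> sets \<rho>" using S Bt by (auto simp: sets_char)
    qed
    also have "\<dots> = emeasure \<rho> B"
    proof (rule emeasure_Diff_null_set)
      have "{\<chi> i. 1} \<in> sets \<rho>" using S one_torus by (auto simp: sets_char)
      then show "{\<chi> i. 1 :: complex^'d} \<in> null_sets \<rho>" using one by (simp add: null_sets_def)
      show "B \<in> sets \<rho>" using S Bt by (auto simp: sets_char)
    qed
    finally show ?thesis .
  qed
  show ?thesis
    using rho_eq[OF sets1 one1] rho_eq[OF sets2 one2] hdistr unfolding \<nu>1_def \<nu>2_def by simp
qed

end
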